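(* Let $\varphi$ be an LTL formula over $2^{V_i}$ and let $\mathcal{A}_\varphi$ be an ACA with $\mathcal{L}(\mathcal{A}_\varphi)=\mathcal{L}(\varphi)$. Let $s$ be a strategy for process $p_i$. If $s$ is delay-dominant for $\mathcal{A}_\varphi$, then $s$ is remorsefree dominant for $\varphi$.
   Context: Automata. For a finite set $\Sigma$ of atomic propositions, an alternating co-Büchi automaton (ACA) over $2^\Sigma$ is a tuple $\mathcal{A}=(Q,q_0,\delta,F)$ with a finite set of states $Q$, initial state $q_0\in Q$, set of rejecting states $F\subseteq Q$, and transition function $\delta:Q\times 2^\Sigma\to\mathbb{B}^+(Q)$ into positive Boolean formulas over $Q$ given in disjunctive normal form; $\delta(q,a)$ is identified with the set of its disjuncts, each disjunct $c\in\delta(q,a)$ being a set of states. A run tree of $\mathcal{A}$ on $\sigma=\sigma_0\sigma_1\cdots\in(2^\Sigma)^\omega$ is a $Q$-labeled tree $(T,\ell)$ ($T\subseteq\mathbb{N}^*$ prefix-closed) with $\ell(\varepsilon)=q_0$ and $\{\ell(x')\mid x'\text{ a child of }x\}\in\delta(\ell(x),\sigma_{|x|})$ for every node $x$; it is accepting if every infinite branch visits $F$ only finitely often. $\mathcal{A}$ accepts $\sigma$ if some run tree on $\sigma$ is accepting; $\mathcal{L}(\mathcal{A})$ is the set of accepted words. For an LTL formula $\varphi$, $\mathcal{L}(\varphi)$ is the set of infinite words satisfying $\varphi$. (As implicit in the game below, each $\delta(q,a)$ and each of its disjuncts is nonempty.) Processes and strategies. A process $p_i$ has disjoint finite sets $I_i$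 of input and $O_i$ of output variables; $V_i=I_i\cup O_i$. A strategy for $p_i$ is a function $s:(2^{I_i})^*\to 2^{O_i}$ representable by a finite Moore machine. For $\gamma\in(2^{I_i})^\omega$ the computation $\mathrm{comp}(s,\gamma)\in(2^{V_i})^\omega$ is given by $\mathrm{comp}(s,\gamma)_j=\gamma_j\cup s(\gamma_0\cdots\gamma_{j-1})$ for all $j\ge 0$. Delay-dominance game. Let $\mathcal{A}=(Q,q_0,\delta,F)$ be an ACA and $\sigma,\sigma'$ infinite words over its alphabet. The game $(\mathcal{A},\sigma,\sigma')$ is played between Duplicator (Player 0) and Spoiler (Player 1) on positions of the forms $((p,q),j)$ and $((p,q,c,c'),j)$ (owned by Spoiler) and $((p,q,c),j)$ and $((p,q,c,q'),j)$ (owned by Duplicator), with $p,q,q'\in Q$, $c,c'\subseteq Q$, $j\in\mathbb{N}$. Moves: from $((p,q),j)$ to $((p,q,c),j)$ with $c\in\delta(p,\sigma_j)$; from $((p,q,c),j)$ to $((p,q,c,c'),j)$ with $c'\in\delta(q,\sigma'_j)$; from $((p,q,c,c'),j)$ to $((p,q,c,q'),j)$ with $q'\in c'$; from $((p,q,c,q'),j)$ to $((p',q'),j+1)$ with $p'\in c$. The initial position is $((q_0,q_0),0)$. For a position whose state tuple is $(p,q)$, $(p,q,c)$, $(p,q,c,c')$ or $(p,q,c,q')$, its alternative state is $p$ and its dominant state is $q$. A play $\rho_0\rho_1\cdots$ is won by Duplicator iff for every $k$ such that the dominant state of $\rho_k$ lies in $F$ there is $k'\ge k$ such that the alternative state of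 $\rho_{k'}$ lies in $F$. A strategy of a player maps finite play prefixes ending in one of its positions to a legal successor; a Duplicator strategy is winning if every play from the initial position consistent with it is won by Duplicator. Delay-dominance. For strategies $s,t$ of $p_i$, an ACA $\mathcal{A}$ over $2^{V_i}$ and $\gamma\in(2^{I_i})^\omega$: $s$ delay-dominates $t$ on $\gamma$ if Duplicator has a winning strategy in $(\mathcal{A},\mathrm{comp}(t,\gamma),\mathrm{comp}(s,\gamma))$; $s$ delay-dominates $t$ if this holds for all $\gamma$; $s$ is delay-dominant for $\mathcal{A}$ (and $p_i$) if it delay-dominates every strategy $t$ for $p_i$. Remorsefree dominance. A strategy $s$ for $p_i$ is winning for $\varphi$ if $\mathrm{comp}(s,\gamma)\models\varphi$ for all $\gamma\in(2^{I_i})^\omega$; $s$ is remorsefree dominant for $\varphi$ if for every strategy $t$ for $p_i$ and every $\gamma\in(2^{I_i})^\omega$, $\mathrm{comp}(t,\gamma)\models\varphi$ implies $\mathrm{comp}(s,\gamma)\models\varphi$. *)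

theory Defs
  imports Main
begin

definition word_over :: "'ap set \<Rightarrow> (nat \<Rightarrow> 'ap set) \<Rightarrow> bool" where
  "word_over V \<sigma> \<longleftrightarrow> (\<forall>j. \<sigma> j \<subseteq> V)"

datatype 'ap ltl =
    LTrue
  | LProp 'ap
  | LNot "'ap ltl"
  | LAnd "'ap ltl" "'ap ltl"
  | LNext "'ap ltl"
  | LUntil "'ap ltl" "'ap ltl"

fun ltl_props :: "'ap ltl \<Rightarrow> 'ap set" where
  "ltl_props LTrue = {}"
| "ltl_props (LProp a) = {a}"
| "ltl_props (LNot f) = ltl_props f"
| "ltl_props (LAnd f g) = ltl_props f \<union> ltl_props g"
| "ltl_props (LNext f) = ltl_props f"
| "ltl_props (LUntil f g) = ltl_props f \<union> ltl_props g"

fun ltl_sat :: "(nat \<Rightarrow> 'ap set) \<Rightarrow> 'ap ltl \<Rightarrow> bool" where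
  "ltl_sat \<sigma> LTrue = True"
| "ltl_sat \<sigma> (LProp a) = (a \<in> \<sigma> 0)"
| "ltl_sat \<sigma> (LNot f) = (\<not> ltl_sat \<sigma> f)"
| "ltl_sat \<sigma> (LAnd f g) = (ltl_sat \<sigma> f \<and> ltl_sat \<sigma> g)"
| "ltl_sat \<sigma> (LNext f) = ltl_sat (\<lambda>j. \<sigma> (Suc j)) f"
| "ltl_sat \<sigma> (LUntil f g) =
     (\<exists>k. ltl_sat (\<lambda>j. \<sigma> (j + k)) g \<and> (\<forall>i<k. ltl_sat (\<lambda>j. \<sigma> (j + i)) f))"

text \<open>trans q a is the set of disjuncts (each a set of states) of the DNF formula delta(q,a).\<close>
record ('q, 'ap) aca =
  states :: "'q set"
  init :: 'q
  trans :: "'q \<Rightarrow> 'ap set \<Rightarrow> 'q set set"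
  rej :: "'q set"

definition aca_wf :: "'ap set \<Rightarrow> ('q, 'ap) aca \<Rightarrow> bool" where
  "aca_wf \<Sigma> A \<longleftrightarrow> finite \<Sigma> \<and> finite (states A) \<and> init A \<in> states A \<and> rej A \<subseteq> states A \<and>
     (\<forall>q\<in>states A. \<forall>a. a \<subseteq> \<Sigma> \<longrightarrow>
        finite (trans A q a) \<and> trans A q a \<noteq> {} \<and>
        (\<forall>c\<in>trans A q a. c \<noteq> {} \<and> c \<subseteq> states A))"

definition run_tree :: "('q, 'ap) aca \<Rightarrow> (nat \<Rightarrow> 'ap set) \<Rightarrow> nat list set \<Rightarrow> (nat list \<Rightarrow> 'q) \<Rightarrow> bool" where
  "run_tree A \<sigma> T l \<longleftrightarrow>
     [] \<in> T \<and> (\<forall>x y. x @ y \<in> T \<longrightarrow> x \<in> T) \<and> l [] = init A \<and>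
     (\<forall>x\<in>T. {l (x @ [n]) | n. x @ [n] \<in> T} \<in> trans A (l x) (\<sigma> (length x)))"

definition infinite_branch :: "nat list set \<Rightarrow> (nat \<Rightarrow> nat list) \<Rightarrow> bool" where
  "infinite_branch T b \<longleftrightarrow> b 0 = [] \<and> (\<forall>k. b k \<in> T \<and> (\<exists>n. b (Suc k) = b k @ [n]))"

definition accepting_run :: "('q, 'ap) aca \<Rightarrow> nat list set \<Rightarrow> (nat list \<Rightarrow> 'q) \<Rightarrow> bool" where
  "accepting_run A T l \<longleftrightarrow> (\<forall>b. infinite_branch T b \<longrightarrow> finite {k. l (b k) \<in> rej A})"

definition aca_accepts :: "('q, 'ap) aca \<Rightarrow> (nat \<Rightarrow> 'ap set) \<Rightarrow> bool" where
  "aca_accepts A \<sigma> \<longleftrightarrow> (\<exists>T l. run_tree A \<sigma> T l \<and> accepting_run A T l)"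

text \<open>A strategy for a process with inputs Inp and outputs Out: a function on finite input
  sequences with values in 2^Out that is representable by a finite Moore machine
  (states encoded as natural numbers).\<close>
definition is_strategy :: "'ap set \<Rightarrow> 'ap set \<Rightarrow> ('ap set list \<Rightarrow> 'ap set) \<Rightarrow> bool" where
  "is_strategy Inp Out s \<longleftrightarrow>
     (\<forall>w. set w \<subseteq> Pow Inp \<longrightarrow> s w \<subseteq> Out) \<and>
     (\<exists>(M::nat set) m0 \<tau> out. finite M \<and> m0 \<in> M \<and>
        (\<forall>m\<in>M. \<forall>a. a \<subseteq> Inp \<longrightarrow> \<tau> m a \<in> M) \<and>
        (\<forall>w. set w \<subseteq> Pow Inp \<longrightarrow> s w = out (foldl \<tau> m0 w)))"

definition comp :: "('ap set list \<Rightarrow> 'ap set) \<Rightarrow> (nat \<Rightarrow> 'ap set) \<Rightarrow> nat \<Rightarrow> 'ap set" where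
  "comp s \<gamma> j = \<gamma> j \<union> s (map \<gamma> [0..<j])"

datatype 'q gpos =
    PQ 'q 'q nat
  | PC 'q 'q "'q set" nat
  | PCC 'q 'q "'q set" "'q set" nat
  | PCQ 'q 'q "'q set" 'q nat

fun alt_state :: "'q gpos \<Rightarrow> 'q" where
  "alt_state (PQ p q j) = p"
| "alt_state (PC p q c j) = p"
| "alt_state (PCC p q c c' j) = p"
| "alt_state (PCQ p q c q' j) = p"

fun dom_state :: "'q gpos \<Rightarrow> 'q" where
  "dom_state (PQ p q j) = q"
| "dom_state (PC p q c j) = q"
| "dom_state (PCC p q c c' j) = q"
| "dom_state (PCQ p q c q' j) = q"

fun dup_owned :: "'q gpos \<Rightarrow> bool" where
  "dup_owned (PQ p q j) = False"
| "dup_owned (PC p q c j) = True"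
| "dup_owned (PCC p q c c' j) = False"
| "dup_owned (PCQ p q c q' j) = True"

inductive game_move :: "('q, 'ap) aca \<Rightarrow> (nat \<Rightarrow> 'ap set) \<Rightarrow> (nat \<Rightarrow> 'ap set) \<Rightarrow> 'q gpos \<Rightarrow> 'q gpos \<Rightarrow> bool"
  for A \<sigma> \<sigma>' where
  "c \<in> trans A p (\<sigma> j) \<Longrightarrow> game_move A \<sigma> \<sigma>' (PQ p q j) (PC p q c j)"
| "c' \<in> trans A q (\<sigma>' j) \<Longrightarrow> game_move A \<sigma> \<sigma>' (PC p q c j) (PCC p q c c' j)"
| "q' \<in> c' \<Longrightarrow> game_move A \<sigma> \<sigma>' (PCC p q c c' j) (PCQ p q c q' j)"
| "p' \<in> c \<Longrightarrow> game_move A \<sigma> \<sigma>' (PCQ p q c q' j) (PQ p' q' (Suc j))"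

definition game_init :: "('q, 'ap) aca \<Rightarrow> 'q gpos" where
  "game_init A = PQ (init A) (init A) 0"

definition play_prefix :: "('q, 'ap) aca \<Rightarrow> (nat \<Rightarrow> 'ap set) \<Rightarrow> (nat \<Rightarrow> 'ap set) \<Rightarrow> 'q gpos list \<Rightarrow> bool" where
  "play_prefix A \<sigma> \<sigma>' xs \<longleftrightarrow> xs \<noteq> [] \<and> hd xs = game_init A \<and>
     (\<forall>i. Suc i < length xs \<longrightarrow> game_move A \<sigma> \<sigma>' (xs ! i) (xs ! Suc i))"

definition is_play :: "('q, 'ap) aca \<Rightarrow> (nat \<Rightarrow> 'ap set) \<Rightarrow> (nat \<Rightarrow> 'ap set) \<Rightarrow> (nat \<Rightarrow> 'q gpos) \<Rightarrow> bool" where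
  "is_play A \<sigma> \<sigma>' \<rho> \<longleftrightarrow> \<rho> 0 = game_init A \<and> (\<forall>k. game_move A \<sigma> \<sigma>' (\<rho> k) (\<rho> (Suc k)))"

definition dup_wins_play :: "('q, 'ap) aca \<Rightarrow> (nat \<Rightarrow> 'q gpos) \<Rightarrow> bool" where
  "dup_wins_play A \<rho> \<longleftrightarrow>
     (\<forall>k. dom_state (\<rho> k) \<in> rej A \<longrightarrow> (\<exists>k'\<ge>k. alt_state (\<rho> k') \<in> rej A))"

definition dup_strategy :: "('q, 'ap) aca \<Rightarrow> (nat \<Rightarrow> 'ap set) \<Rightarrow> (nat \<Rightarrow> 'ap set) \<Rightarrow> ('q gpos list \<Rightarrow> 'q gpos) \<Rightarrow> bool" where
  "dup_strategy A \<sigma> \<sigma>' f \<longleftrightarrow>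
     (\<forall>xs. play_prefix A \<sigma> \<sigma>' xs \<and> dup_owned (last xs) \<longrightarrow> game_move A \<sigma> \<sigma>' (last xs) (f xs))"

definition consistent_dup :: "('q gpos list \<Rightarrow> 'q gpos) \<Rightarrow> (nat \<Rightarrow> 'q gpos) \<Rightarrow> bool" where
  "consistent_dup f \<rho> \<longleftrightarrow> (\<forall>k. dup_owned (\<rho> k) \<longrightarrow> \<rho> (Suc k) = f (map \<rho> [0..<Suc k]))"

definition dup_wins_game :: "('q, 'ap) aca \<Rightarrow> (nat \<Rightarrow> 'ap set) \<Rightarrow> (nat \<Rightarrow> 'ap set) \<Rightarrow> bool" where
  "dup_wins_game A \<sigma> \<sigma>' \<longleftrightarrow>
     (\<exists>f. dup_strategy A \<sigma> \<sigma>' f \<and>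
        (\<forall>\<rho>. is_play A \<sigma> \<sigma>' \<rho> \<and> consistent_dup f \<rho> \<longrightarrow> dup_wins_play A \<rho>))"

definition input_seq :: "'ap set \<Rightarrow> (nat \<Rightarrow> 'ap set) \<Rightarrow> bool" where
  "input_seq Inp \<gamma> \<longleftrightarrow> word_over Inp \<gamma>"

definition delay_dominates_on :: "('q, 'ap) aca \<Rightarrow> ('ap set list \<Rightarrow> 'ap set) \<Rightarrow> ('ap set list \<Rightarrow> 'ap set) \<Rightarrow> (nat \<Rightarrow> 'ap set) \<Rightarrow> bool" where
  "delay_dominates_on A s t \<gamma> \<longleftrightarrow> dup_wins_game A (comp t \<gamma>) (comp s \<gamma>)"

definition delay_dominates :: "('q, 'ap) aca \<Rightarrow> 'ap set \<Rightarrow> ('ap set list \<Rightarrow> 'ap set) \<Rightarrow> ('ap set list \<Rightarrow> 'ap set) \<Rightarrow> bool" where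
  "delay_dominates A Inp s t \<longleftrightarrow> (\<forall>\<gamma>. input_seq Inp \<gamma> \<longrightarrow> delay_dominates_on A s t \<gamma>)"

definition delay_dominant :: "('q, 'ap) aca \<Rightarrow> 'ap set \<Rightarrow> 'ap set \<Rightarrow> ('ap set list \<Rightarrow> 'ap set) \<Rightarrow> bool" where
  "delay_dominant A Inp Out s \<longleftrightarrow> (\<forall>t. is_strategy Inp Out t \<longrightarrow> delay_dominates A Inp s t)"

definition remorsefree_dominant :: "'ap ltl \<Rightarrow> 'ap set \<Rightarrow> 'ap set \<Rightarrow> ('ap set list \<Rightarrow> 'ap set) \<Rightarrow> bool" where
  "remorsefree_dominant \<phi> Inp Out s \<longleftrightarrow>
     (\<forall>t \<gamma>. is_strategy Inp Out t \<and> input_seq Inp \<gamma> \<and> ltl_sat (comp t \<gamma>) \<phi> \<longrightarrow> ltl_sat (comp s \<gamma>) \<phi>)"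

end

theory Submission
  imports Defs "HOL-Library.Countable_Set"
begin

fun idx :: "'q gpos \<Rightarrow> nat" where
  "idx (PQ p q j) = j" | "idx (PC p q c j) = j" | "idx (PCC p q c c' j) = j" | "idx (PCQ p q c q' j) = j"

fun csel :: "'q gpos \<Rightarrow> 'q set" where
  "csel (PCC p q c c' j) = c'" | "csel _ = {}"

definition cons_hist :: "('q gpos list \<Rightarrow> 'q gpos) \<Rightarrow> 'q gpos list \<Rightarrow> bool" where
  "cons_hist f H \<longleftrightarrow> (\<forall>i. Suc i < length H \<longrightarrow> dup_owned (H!i) \<longrightarrow> H!Suc i = f (take (Suc i) H))"

lemma play_prefix_snoc:
  assumes "play_prefix A \<sigma> \<sigma>' xs" "game_move A \<sigma> \<sigma>' (last xs) y"
  shows "play_prefix A \<sigma> \<sigma>' (xs @ [y])"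
  using assms unfolding play_prefix_def
proof (intro conjI allI impI)
  fix i assume a: "xs \<noteq> [] \<and> hd xs = game_init A \<and> (\<forall>i. Suc i < length xs \<longrightarrow> game_move A \<sigma> \<sigma>' (xs ! i) (xs ! Suc i))"
    "game_move A \<sigma> \<sigma>' (last xs) y" and i: "Suc i < length (xs @ [y])"
  show "game_move A \<sigma> \<sigma>' ((xs @ [y]) ! i) ((xs @ [y]) ! Suc i)"
  proof (cases "Suc i < length xs")
    case True then show ?thesis using a by (simp add: nth_append)
  next
    case False then have "i = length xs - 1" "Suc i = length xs" using i a by auto
    then show ?thesis using a by (simp add: nth_append last_conv_nth)
  qed
qed auto

context
  fixes \<Sigma> :: "'ap set" and A :: "('q,'ap) aca" and \<sigma> \<sigma>' :: "nat \<Rightarrow> 'ap set"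
    and T :: "nat list set" and l :: "nat list \<Rightarrow> 'q" and f :: "'q gpos list \<Rightarrow> 'q gpos"
  assumes wf: "aca_wf \<Sigma> A" and word: "word_over \<Sigma> \<sigma>'" and rt: "run_tree A \<sigma> T l"
    and ds: "dup_strategy A \<sigma> \<sigma>' f"
begin

definition CN :: "nat list \<Rightarrow> 'q set" where
  "CN N = {l (N @ [m]) | m. N @ [m] \<in> T}"

definition stepfun :: "'q gpos list \<times> nat list \<Rightarrow> nat \<Rightarrow> 'q gpos list \<times> nat list" where
  "stepfun st n = (let H = fst st; N = snd st; pq = last H; p = alt_state pq; q = dom_state pq;
     j = idx pq; c = CN N; H1 = H @ [PC p q c j]; c' = csel (f H1);
     H3 = H1 @ [f H1, PCQ p q c (from_nat_into c' n) j]; H4 = H3 @ [f H3]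
     in (H4, N @ [SOME m. N @ [m] \<in> T \<and> l (N @ [m]) = alt_state (f H3)]))"

definition Inv :: "'q gpos list \<Rightarrow> nat list \<Rightarrow> nat \<Rightarrow> bool" where
  "Inv H N k \<longleftrightarrow> play_prefix A \<sigma> \<sigma>' H \<and> cons_hist f H \<and> length H = 4*k+1 \<and>
     (\<exists>q. last H = PQ (l N) q k \<and> q \<in> states A) \<and> N \<in> T \<and> length N = k"

lemma step:
  assumes inv: "Inv H N k"
  shows "\<exists>q c' p' m. last H = PQ (l N) q k \<and>
    stepfun (H, N) n = (H @ [PC (l N) q (CN N) k, PCC (l N) q (CN N) c' k,
        PCQ (l N) q (CN N) (from_nat_into c' n) k, PQ p' (from_nat_into c' n) (Suc k)], N @ [m])
    \<and> f (H @ [PC (l N) q (CN N) k]) = PCC (l N) q (CN N) c' k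
    \<and> c' \<in> trans A q (\<sigma>' k) \<and> countable c' \<and> c' \<noteq> {} \<and> l (N @ [m]) = p'
    \<and> Inv (H @ [PC (l N) q (CN N) k, PCC (l N) q (CN N) c' k,
        PCQ (l N) q (CN N) (from_nat_into c' n) k, PQ p' (from_nat_into c' n) (Suc k)]) (N @ [m]) (Suc k)"
proof -
  from inv obtain q where lastH: "last H = PQ (l N) q k" and qS: "q \<in> states A"
    and pp: "play_prefix A \<sigma> \<sigma>' H" and ch: "cons_hist f H" and lenH: "length H = 4*k+1"
    and NT: "N \<in> T" and lenN: "length N = k"
    unfolding Inv_def by blast
  define p where "p = l N"
  define c where "c = CN N"
  have cmem: "c \<in> trans A p (\<sigma> k)"
    using rt NT lenN unfolding run_tree_def c_def CN_def p_def by auto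
  define H1 where "H1 = H @ [PC p q c k]"
  have pp1: "play_prefix A \<sigma> \<sigma>' H1"
    unfolding H1_def by (rule play_prefix_snoc[OF pp]) (unfold lastH p_def, rule game_move.intros(1), use cmem p_def in simp)
  have "dup_owned (last H1)" by (simp add: H1_def)
  then have "game_move A \<sigma> \<sigma>' (last H1) (f H1)"
    using ds pp1 unfolding dup_strategy_def by blast
  then obtain c' where fH1: "f H1 = PCC p q c c' k" and c'mem: "c' \<in> trans A q (\<sigma>' k)"
    unfolding H1_def by (auto elim: game_move.cases)
  have \<sigma>'k: "\<sigma>' k \<subseteq> \<Sigma>" using word unfolding word_over_def by auto
  have c'ne: "c' \<noteq> {}" and c'sub: "c' \<subseteq> states A" and fin: "finite (states A)"
    using wf qS \<sigma>'k c'mem unfolding aca_wf_def by blast+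
  have c'c: "countable c'" using c'sub fin countable_finite finite_subset by blast
  define q' where "q' = from_nat_into c' n"
  have q'mem: "q' \<in> c'" unfolding q'_def using c'ne by (rule from_nat_into)
  define H3 where "H3 = H1 @ [f H1, PCQ p q c q' k]"
  have pp2: "play_prefix A \<sigma> \<sigma>' (H1 @ [f H1])"
    by (rule play_prefix_snoc[OF pp1]) (unfold fH1, simp add: H1_def game_move.intros c'mem)
  have pp3: "play_prefix A \<sigma> \<sigma>' H3"
    unfolding H3_def using play_prefix_snoc[OF pp2, of "PCQ p q c q' k"]
    by (simp add: fH1 game_move.intros q'mem)
  have "dup_owned (last H3)" by (simp add: H3_def)
  then have "game_move A \<sigma> \<sigma>' (last H3) (f H3)"
    using ds pp3 unfolding dup_strategy_def by blast
  then obtain p' where fH3: "f H3 = PQ p' q' (Suc k)" and p'mem: "p' \<in> c"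
    unfolding H3_def by (auto elim: game_move.cases)
  have pp4: "play_prefix A \<sigma> \<sigma>' (H3 @ [f H3])"
    by (rule play_prefix_snoc[OF pp3]) (unfold fH3, simp add: H3_def game_move.intros p'mem)
  have ex: "\<exists>m. N @ [m] \<in> T \<and> l (N @ [m]) = p'" using p'mem unfolding c_def CN_def by auto
  define m where "m = (SOME m. N @ [m] \<in> T \<and> l (N @ [m]) = p')"
  have m: "N @ [m] \<in> T \<and> l (N @ [m]) = p'" unfolding m_def using someI_ex[OF ex] .
  have sf: "stepfun (H, N) n = (H3 @ [f H3], N @ [m])"
  proof -
    have fH1': "f (H @ [PC (l N) q (CN N) k]) = PCC (l N) q (CN N) c' k"
      using fH1 unfolding H1_def p_def c_def .
    have fH3': "f (H @ [PC (l N) q (CN N) k, PCC (l N) q (CN N) c' k, PCQ (l N) q (CN N) (from_nat_into c' n) k]) = PQ p' (from_nat_into c' n) (Suc k)"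
      using fH3 fH1 unfolding H3_def H1_def p_def c_def q'_def by simp
    show ?thesis
      unfolding stepfun_def Let_def using lastH
      by (simp add: fH1' fH3' H3_def H1_def fH1 fH3 m_def p_def c_def q'_def)
  qed
  have H4: "H3 @ [f H3] = H @ [PC p q c k, PCC p q c c' k, PCQ p q c q' k, PQ p' q' (Suc k)]"
  proof -
    have "H3 = H @ [PC p q c k, PCC p q c c' k, PCQ p q c q' k]" unfolding H3_def fH1 by (simp add: H1_def)
    then show ?thesis using fH3 by simp
  qed
  have ch4: "cons_hist f (H3 @ [f H3])"
    unfolding cons_hist_def
  proof (intro allI impI)
    fix i assume i: "Suc i < length (H3 @ [f H3])" and d: "dup_owned ((H3 @ [f H3]) ! i)"
    have L: "length (H3 @ [f H3]) = length H + 4" by (simp add: H3_def H1_def)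
    consider "Suc i < length H" | "i = length H - 1" | "i = length H" | "i = length H + 1" | "i = length H + 2"
      using i L lenH by linarith
    then show "(H3 @ [f H3]) ! Suc i = f (take (Suc i) (H3 @ [f H3]))"
    proof cases
      case 1
      then show ?thesis using ch d unfolding cons_hist_def H4 by (auto simp: nth_append)
    next
      case 2
      have ne: "H \<noteq> []" using lenH by auto
      have "(H3 @ [f H3]) ! i = H ! (length H - 1)" using 2 ne unfolding H4 by (simp add: nth_append)
      also have "\<dots> = last H" using ne by (simp add: last_conv_nth)
      finally have "(H3 @ [f H3]) ! i = last H" .
      then show ?thesis using d lastH by simp
    next
      case 3
      then show ?thesis unfolding H4 by (simp add: nth_append fH1[symmetric] H1_def)
    next
      case 4
      then show ?thesis using d unfolding H4 by (simp add: nth_append)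
    next
      case 5
      have "take (Suc i) (H3 @ [f H3]) = H3" using 5 by (simp add: H3_def H1_def)
      then show ?thesis using 5 by (simp add: H3_def H1_def nth_append)
    qed
  qed
  have inv4: "Inv (H3 @ [f H3]) (N @ [m]) (Suc k)"
    unfolding Inv_def using pp4 ch4 lenH lenN m c'sub q'mem
    by (auto simp: H4)
  show ?thesis
    apply (rule exI[of _ q], rule exI[of _ c'], rule exI[of _ p'], rule exI[of _ m])
    using lastH sf[unfolded H4] fH1[unfolded H1_def] c'mem c'c c'ne m inv4[unfolded H4] unfolding p_def c_def q'_def by simp
qed


definition st :: "nat list \<Rightarrow> 'q gpos list \<times> nat list" where
  "st x = foldl stepfun ([game_init A], []) x"

definition lab :: "nat list \<Rightarrow> 'q" where
  "lab x = dom_state (last (fst (st x)))"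

lemma st_snoc: "st (x @ [n]) = stepfun (st x) n"
  unfolding st_def by simp

lemma inv_st: "Inv (fst (st x)) (snd (st x)) (length x)"
proof (induction x rule: rev_induct)
  case Nil
  have "init A \<in> states A" using wf unfolding aca_wf_def by blast
  moreover have "[] \<in> T" "l [] = init A" using rt unfolding run_tree_def by auto
  ultimately show ?case
    by (simp add: st_def Inv_def play_prefix_def cons_hist_def game_init_def)
next
  case (snoc n x)
  have e: "st x = (fst (st x), snd (st x))" by simp
  from step[OF snoc, of n] show ?case
    by (auto simp: st_snoc)
qed

lemma round:
  "\<exists>q c' p' m. last (fst (st x)) = PQ (l (snd (st x))) q (length x) \<and>
    fst (st (x @ [n])) = fst (st x) @ [PC (l (snd (st x))) q (CN (snd (st x))) (length x),
       PCC (l (snd (st x))) q (CN (snd (st x))) c' (length x),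
       PCQ (l (snd (st x))) q (CN (snd (st x))) (from_nat_into c' n) (length x),
       PQ p' (from_nat_into c' n) (Suc (length x))] \<and>
    snd (st (x @ [n])) = snd (st x) @ [m] \<and>
    f (fst (st x) @ [PC (l (snd (st x))) q (CN (snd (st x))) (length x)]) = PCC (l (snd (st x))) q (CN (snd (st x))) c' (length x) \<and>
    c' \<in> trans A q (\<sigma>' (length x)) \<and> countable c' \<and> c' \<noteq> {}"
proof -
  from step[OF inv_st[of x], of n] obtain q c' p' m where
    "last (fst (st x)) = PQ (l (snd (st x))) q (length x)"
    "stepfun (fst (st x), snd (st x)) n = (fst (st x) @ [PC (l (snd (st x))) q (CN (snd (st x))) (length x),
       PCC (l (snd (st x))) q (CN (snd (st x))) c' (length x),
       PCQ (l (snd (st x))) q (CN (snd (st x))) (from_nat_into c' n) (length x),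
       PQ p' (from_nat_into c' n) (Suc (length x))], snd (st x) @ [m])"
    "f (fst (st x) @ [PC (l (snd (st x))) q (CN (snd (st x))) (length x)]) = PCC (l (snd (st x))) q (CN (snd (st x))) c' (length x)"
    "c' \<in> trans A q (\<sigma>' (length x))" "countable c'" "c' \<noteq> {}"
    by blast
  then show ?thesis by (intro exI[of _ q] exI[of _ c'] exI[of _ p'] exI[of _ m]) (simp add: st_snoc)
qed

lemma run': "run_tree A \<sigma>' UNIV lab"
  unfolding run_tree_def
proof (intro conjI ballI allI impI)
  show "lab [] = init A" by (simp add: lab_def st_def game_init_def)
next
  fix x :: "nat list"
  obtain q c' where q: "last (fst (st x)) = PQ (l (snd (st x))) q (length x)"
    and f1: "f (fst (st x) @ [PC (l (snd (st x))) q (CN (snd (st x))) (length x)]) = PCC (l (snd (st x))) q (CN (snd (st x))) c' (length x)"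
    and c': "c' \<in> trans A q (\<sigma>' (length x))" "countable c'" "c' \<noteq> {}"
    using round[of x 0] by blast
  have "lab (x @ [n]) = from_nat_into c' n" for n
  proof -
    from round[of x n] obtain q2 c2 p' m where
      "last (fst (st x)) = PQ (l (snd (st x))) q2 (length x)"
      "fst (st (x @ [n])) = fst (st x) @ [PC (l (snd (st x))) q2 (CN (snd (st x))) (length x),
       PCC (l (snd (st x))) q2 (CN (snd (st x))) c2 (length x),
       PCQ (l (snd (st x))) q2 (CN (snd (st x))) (from_nat_into c2 n) (length x),
       PQ p' (from_nat_into c2 n) (Suc (length x))]"
      "f (fst (st x) @ [PC (l (snd (st x))) q2 (CN (snd (st x))) (length x)]) = PCC (l (snd (st x))) q2 (CN (snd (st x))) c2 (length x)"
      by blast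
    then show ?thesis using q f1 by (simp add: lab_def)
  qed
  then have "{lab (x @ [n]) |n. x @ [n] \<in> UNIV} = range (from_nat_into c')" by auto
  also have "\<dots> = c'" using c' by simp
  finally show "{lab (x @ [n]) |n. x @ [n] \<in> UNIV} \<in> trans A (lab x) (\<sigma>' (length x))"
    using c' q by (simp add: lab_def)
qed auto


lemma acc':
  assumes acc: "accepting_run A T l"
    and win: "\<forall>\<rho>. is_play A \<sigma> \<sigma>' \<rho> \<and> consistent_dup f \<rho> \<longrightarrow> dup_wins_play A \<rho>"
  shows "accepting_run A UNIV lab"
  unfolding accepting_run_def
proof (intro allI impI)
  fix b assume ib: "infinite_branch UNIV b"
  have "\<forall>k. \<exists>n. b (Suc k) = b k @ [n]" using ib unfolding infinite_branch_def by blast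
  then obtain nb where nb: "\<And>k. b (Suc k) = b k @ [nb k]" by metis
  have len: "length (b k) = k" for k
    by (induction k) (use ib nb in \<open>auto simp: infinite_branch_def\<close>)
  define Hk where "Hk k = fst (st (b k))" for k
  define Nk where "Nk k = snd (st (b k))" for k
  have invk: "Inv (Hk k) (Nk k) k" for k using inv_st[of "b k"] len by (simp add: Hk_def Nk_def)
  have lenH: "length (Hk k) = 4*k+1" for k using invk[of k] unfolding Inv_def by simp
  have rnd: "\<exists>q c' p' m. last (Hk k) = PQ (l (Nk k)) q k \<and>
    Hk (Suc k) = Hk k @ [PC (l (Nk k)) q (CN (Nk k)) k, PCC (l (Nk k)) q (CN (Nk k)) c' k,
       PCQ (l (Nk k)) q (CN (Nk k)) (from_nat_into c' (nb k)) k, PQ p' (from_nat_into c' (nb k)) (Suc k)] \<and>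
    Nk (Suc k) = Nk k @ [m]" for k
    using round[of "b k" "nb k"] unfolding Hk_def Nk_def nb[symmetric] len by blast
  have ext: "\<exists>ys. Hk (Suc k) = Hk k @ ys" for k using rnd[of k] by blast
  have pre: "take (length (Hk k)) (Hk k') = Hk k" if "k \<le> k'" for k k'
    using that
  proof (induction k' rule: dec_induct)
    case base then show ?case by simp
  next
    case (step k')
    obtain ys where "Hk (Suc k') = Hk k' @ ys" using ext by blast
    moreover have "length (Hk k) \<le> length (Hk k')" using lenH step(1) by simp
    ultimately show ?case using step(3) by simp
  qed
  have nthK: "Hk k' ! i = Hk k ! i" if "k \<le> k'" "i < length (Hk k)" for k k' i
    using pre[OF that(1)] that(2) by (metis nth_take)
  define \<rho> where "\<rho> i = Hk (Suc i) ! i" for i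
  have rho_eq: "\<rho> i = Hk k ! i" if "i < length (Hk k)" for i k
  proof (cases "k \<le> Suc i")
    case True then show ?thesis using nthK[OF True that] by (simp add: \<rho>_def)
  next
    case False
    then have "Suc i \<le> k" by simp
    moreover have "i < length (Hk (Suc i))" using lenH by simp
    ultimately show ?thesis using nthK by (simp add: \<rho>_def)
  qed
  have play: "is_play A \<sigma> \<sigma>' \<rho>"
    unfolding is_play_def
  proof (intro conjI allI)
    have pp: "play_prefix A \<sigma> \<sigma>' (Hk 1)" using invk[of 1] unfolding Inv_def by simp
    then show "\<rho> 0 = game_init A" unfolding \<rho>_def play_prefix_def by (metis One_nat_def hd_conv_nth)
  next
    fix i
    have pp: "play_prefix A \<sigma> \<sigma>' (Hk (Suc (Suc i)))" using invk unfolding Inv_def by simp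
    have l: "Suc i < length (Hk (Suc (Suc i)))" using lenH by simp
    show "game_move A \<sigma> \<sigma>' (\<rho> i) (\<rho> (Suc i))"
      using pp l rho_eq[of i "Suc (Suc i)"] rho_eq[of "Suc i" "Suc (Suc i)"]
      unfolding play_prefix_def by simp
  qed
  have cons: "consistent_dup f \<rho>"
    unfolding consistent_dup_def
  proof (intro allI impI)
    fix i assume d: "dup_owned (\<rho> i)"
    define H where "H = Hk (Suc (Suc i))"
    have l: "Suc i < length H" using lenH by (simp add: H_def)
    have ch: "cons_hist f H" using invk unfolding Inv_def H_def by simp
    have m: "map \<rho> [0..<Suc i] = take (Suc i) H"
    proof (rule nth_equalityI)
      show "length (map \<rho> [0..<Suc i]) = length (take (Suc i) H)" using l by simp
      fix j assume "j < length (map \<rho> [0..<Suc i])"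
      then have j: "j < Suc i" by simp
      have "map \<rho> [0..<Suc i] ! j = \<rho> j" using j by (simp only: nth_map_upt) simp
      also have "\<dots> = H ! j" using rho_eq[of j "Suc (Suc i)"] j l by (simp add: H_def)
      finally show "map \<rho> [0..<Suc i] ! j = take (Suc i) H ! j" using j by simp
    qed
    show "\<rho> (Suc i) = f (map \<rho> [0..<Suc i])"
      using ch l d rho_eq[of i "Suc (Suc i)"] rho_eq[of "Suc i" "Suc (Suc i)"]
      unfolding m cons_hist_def H_def by simp
  qed
  have wins: "dup_wins_play A \<rho>" using win play cons by blast
  have alt: "alt_state (\<rho> i) = l (Nk (i div 4))" for i
  proof -
    define k where "k = i div 4"
    obtain q c' p' m where L: "last (Hk k) = PQ (l (Nk k)) q k" and
      E: "Hk (Suc k) = Hk k @ [PC (l (Nk k)) q (CN (Nk k)) k, PCC (l (Nk k)) q (CN (Nk k)) c' k,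
       PCQ (l (Nk k)) q (CN (Nk k)) (from_nat_into c' (nb k)) k, PQ p' (from_nat_into c' (nb k)) (Suc k)]"
      using rnd[of k] by blast
    have r: "\<rho> i = Hk (Suc k) ! i" using rho_eq[of i "Suc k"] lenH unfolding k_def by simp
    have ne: "Hk k \<noteq> []" using lenH[of k] by auto
    have lk: "length (Hk k) = 4*k+1" using lenH by simp
    consider "i = 4*k" | "i = 4*k+1" | "i = 4*k+2" | "i = 4*k+3" unfolding k_def by linarith
    then show ?thesis
    proof cases
      case 1
      have "Hk (Suc k) ! i = Hk k ! (length (Hk k) - 1)" unfolding E using 1 lk by (simp add: nth_append)
      also have "\<dots> = last (Hk k)" using ne by (simp add: last_conv_nth)
      finally show ?thesis using r L k_def by simp
    qed (use r E lk k_def in \<open>simp_all add: nth_append\<close>)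
  qed
  have dom: "dom_state (\<rho> (4*k)) = lab (b k)" for k
  proof -
    have ne: "Hk k \<noteq> []" using lenH[of k] by auto
    have "\<rho> (4*k) = Hk k ! (length (Hk k) - 1)" using rho_eq[of "4*k" k] lenH by simp
    also have "\<dots> = last (Hk k)" using ne by (simp add: last_conv_nth)
    finally show ?thesis by (simp add: lab_def Hk_def)
  qed
  have brT: "infinite_branch T Nk"
    unfolding infinite_branch_def
  proof (intro conjI allI)
    show "Nk 0 = []" using ib unfolding Nk_def infinite_branch_def by (simp add: st_def)
  next
    fix k show "Nk k \<in> T"
      using invk[of k] unfolding Inv_def by blast
  next
    fix k show "\<exists>n. Nk (Suc k) = Nk k @ [n]"
      using rnd[of k] by blast
  qed
  have "finite {k. l (Nk k) \<in> rej A}" using acc brT unfolding accepting_run_def by blast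
  then obtain M where M: "\<And>k. l (Nk k) \<in> rej A \<Longrightarrow> k \<le> M"
    using finite_nat_set_iff_bounded_le by auto
  have "{k. lab (b k) \<in> rej A} \<subseteq> {..M}"
  proof
    fix k assume "k \<in> {k. lab (b k) \<in> rej A}"
    then have "dom_state (\<rho> (4*k)) \<in> rej A" using dom by simp
    then obtain k' where "k' \<ge> 4*k" "alt_state (\<rho> k') \<in> rej A"
      using wins unfolding dup_wins_play_def by blast
    then have "k' div 4 \<le> M" "k \<le> k' div 4" using M alt by auto
    then show "k \<in> {..M}" by simp
  qed
  then show "finite {k. lab (b k) \<in> rej A}" using finite_subset by blast
qed

end
lemma inclusion:
  assumes wf: "aca_wf \<Sigma> A" and word: "word_over \<Sigma> \<sigma>'" and g: "dup_wins_game A \<sigma> \<sigma>'"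
    and a: "aca_accepts A \<sigma>"
  shows "aca_accepts A \<sigma>'"
proof -
  obtain T l where rt: "run_tree A \<sigma> T l" and acc: "accepting_run A T l"
    using a unfolding aca_accepts_def by blast
  obtain f where ds: "dup_strategy A \<sigma> \<sigma>' f"
    and win: "\<forall>\<rho>. is_play A \<sigma> \<sigma>' \<rho> \<and> consistent_dup f \<rho> \<longrightarrow> dup_wins_play A \<rho>"
    using g unfolding dup_wins_game_def by blast
  show ?thesis unfolding aca_accepts_def
    using run'[OF wf word rt ds] acc'[OF wf word rt ds acc win] by blast
qed

lemma comp_word:
  assumes "is_strategy Inp Out t" "input_seq Inp \<gamma>"
  shows "word_over (Inp \<union> Out) (comp t \<gamma>)"
  unfolding word_over_def
proof
  fix j
  have g: "\<gamma> i \<subseteq> Inp" for i using assms(2) unfolding input_seq_def word_over_def by blast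
  have "set (map \<gamma> [0..<j]) \<subseteq> Pow Inp" using g by auto
  then have "t (map \<gamma> [0..<j]) \<subseteq> Out" using assms(1) unfolding is_strategy_def by blast
  then show "comp t \<gamma> j \<subseteq> Inp \<union> Out" using g[of j] unfolding comp_def by blast
qed

theorem theorem5:
  fixes Inp Out :: "'ap set"
    and \<phi> :: "'ap ltl"
    and A :: "('q, 'ap) aca"
    and s :: "'ap set list \<Rightarrow> 'ap set"
  assumes "finite Inp" and "finite Out" and "Inp \<inter> Out = {}"
    and "ltl_props \<phi> \<subseteq> Inp \<union> Out"
    and "aca_wf (Inp \<union> Out) A"
    and "\<forall>\<sigma>. word_over (Inp \<union> Out) \<sigma> \<longrightarrow> (aca_accepts A \<sigma> \<longleftrightarrow> ltl_sat \<sigma> \<phi>)"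
    and "is_strategy Inp Out s"
    and "delay_dominant A Inp Out s"
  shows "remorsefree_dominant \<phi> Inp Out s"
  unfolding remorsefree_dominant_def
proof (intro allI impI)
  fix t \<gamma> assume h: "is_strategy Inp Out t \<and> input_seq Inp \<gamma> \<and> ltl_sat (comp t \<gamma>) \<phi>"
  have wt: "word_over (Inp \<union> Out) (comp t \<gamma>)" using comp_word h by blast
  have ws: "word_over (Inp \<union> Out) (comp s \<gamma>)" using comp_word h assms(7) by blast
  have "aca_accepts A (comp t \<gamma>)" using assms(6) wt h by blast
  moreover have "dup_wins_game A (comp t \<gamma>) (comp s \<gamma>)"
    using assms(8) h unfolding delay_dominant_def delay_dominates_def delay_dominates_on_def by blast
  ultimately have "aca_accepts A (comp s \<gamma>)" using inclusion[OF assms(5) ws] by blast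
  then show "ltl_sat (comp s \<gamma>) \<phi>" using assms(6) ws by blast
qed

end
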